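(* Let $(M,d)$ be a compact metric space, $\mu$ a probability measure on $M$, $k:M\times M\to[0,1]$ measurable, $M^s\subseteq M$ measurable, and $\rho>0$. For a probability measure $\nu$ on $M$ and measurable $v:M\setminus M^s\to[0,1]$ define, for $x\in M\setminus M^s$, $$(T_\nu v)(x)=\frac{\int_{M^s}k(x,y)\,d\nu(y)+\int_{M\setminus M^s}k(x,y)v(y)\,d\nu(y)}{\rho+\int_M k(x,y)\,d\nu(y)}.$$ Let $v^*:M\setminus M^s\to[0,1]$ be the unique measurable map with $T_\mu v^*=v^*$. For a finite sample $S=\{x_1,\dots,x_n\}$ let $\mu_S$ be the empirical measure $\mu_S(P)=\frac1n\sum_{i=1}^n\mathbf 1(x_i\in P)$. Then for every $x\in M\setminus M^s$ and every $\epsilon>0$, $$\Pr_{S\sim\mu^n}\Big[\big|(T_\mu v^* )(x)-(T_{\mu_S}v^* )(x)\big|>\epsilon\Big]<4\exp\Big(-\frac{n\rho^2\epsilon^2}{9}\Big),$$ where $S\sim\mu^n$ means $x_1,\dots,x_n$ are i.i.d. with law $\mu$. *)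

theory Defs
  imports "HOL-Probability.Probability"
begin

definition T_op :: "'a measure \<Rightarrow> ('a \<Rightarrow> 'a \<Rightarrow> real) \<Rightarrow> 'a set \<Rightarrow> real
    \<Rightarrow> ('a \<Rightarrow> real) \<Rightarrow> 'a \<Rightarrow> real" where
  "T_op \<nu> k Ms \<rho> v x =
     ((LINT y:Ms|\<nu>. k x y) + (LINT y:(space \<nu> - Ms)|\<nu>. k x y * v y))
     / (\<rho> + (LINT y|\<nu>. k x y))"

definition empirical_measure :: "nat \<Rightarrow> (nat \<Rightarrow> 'a::topological_space) \<Rightarrow> 'a measure" where
  "empirical_measure n xs =
     measure_of UNIV (sets borel)
       (\<lambda>P. ennreal ((\<Sum>i<n. indicator P (xs i)) / real n))"

end

theory Submission
  imports Defs
begin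

lemma emp_eq:
  fixes xs :: "nat \<Rightarrow> 'a::topological_space"
  assumes "n > 0"
  shows "empirical_measure n xs = distr (measure_pmf (pmf_of_set {..<n})) borel xs"
proof -
  let ?N = "distr (measure_pmf (pmf_of_set {..<n})) borel xs"
  have sN: "sets ?N = sets borel" and spN: "space ?N = UNIV" by auto
  have "?N = measure_of (space ?N) (sets ?N) (emeasure ?N)" by (rule measure_of_of_measure[symmetric])
  also have "\<dots> = measure_of UNIV (sets borel) (emeasure ?N)" by (simp only: sN spN)
  also have "\<dots> = empirical_measure n xs"
    unfolding empirical_measure_def
  proof (rule measure_of_eq)
    show "sets borel \<subseteq> Pow UNIV" by auto
    fix a :: "'a set" assume "a \<in> sigma_sets UNIV (sets borel)"
    then have a: "a \<in> sets borel" by (simp add: sets.sigma_sets_eq[of borel, simplified])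
    have "emeasure ?N a = emeasure (measure_pmf (pmf_of_set {..<n})) (xs -` a)"
      using a by (subst emeasure_distr) auto
    also have "\<dots> = card ({..<n} \<inter> xs -` a) / card {..<n}"
      using assms by (subst emeasure_pmf_of_set) auto
    also have "(\<Sum>i<n. indicator a (xs i)) = real (card ({..<n} \<inter> xs -` a))"
      using sum_indicator_eq_card[of "{..<n}" "xs -` a"] by (simp add: indicator_def)
    ultimately show "emeasure ?N a = ennreal ((\<Sum>i<n. indicator a (xs i)) / real n)"
      by (simp add: ennreal_of_nat_eq_real_of_nat divide_ennreal)
  qed
  finally show ?thesis by simp
qed

lemma emp_integral:
  fixes xs :: "nat \<Rightarrow> 'a::topological_space"
  assumes "n > 0" "g \<in> borel_measurable borel"
  shows "integral\<^sup>L (empirical_measure n xs) g = (\<Sum>i<n. g (xs i)) / n"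
  using assms by (simp add: emp_eq integral_distr, subst integral_pmf_of_set) auto

lemma hoeff:
  fixes \<mu> :: "'a measure" and f :: "'a \<Rightarrow> real" and n :: nat and t :: real
  assumes prob: "prob_space \<mu>" and fm: "f \<in> borel_measurable \<mu>" and fr: "\<And>y. f y \<in> {0..1}"
    and n: "n > 0" and t: "t \<ge> 0"
  shows "measure (PiM {..<n} (\<lambda>_. \<mu>))
     {xs \<in> space (PiM {..<n} (\<lambda>_. \<mu>)). \<bar>(\<Sum>i<n. f (xs i)) / n - integral\<^sup>L \<mu> f\<bar> \<ge> t}
     \<le> 2 * exp (-2 * n * t\<^sup>2)"
proof -
  let ?P = "PiM {..<n} (\<lambda>_. \<mu>)"
  interpret P: prob_space ?P by (rule prob_space_PiM) (use prob in auto)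
  have comp: "distr ?P \<mu> (\<lambda>\<omega>. \<omega> i) = \<mu>" if "i < n" for i
    using distr_PiM_component[of "{..<n}" "\<lambda>_. \<mu>" i] prob that by auto
  have "distr ?P ?P (\<lambda>x. \<lambda>i\<in>{..<n}. x i) = distr ?P ?P (\<lambda>x. x)"
    by (rule distr_cong) (auto simp: space_PiM)
  also have "\<dots> = ?P" by simp
  also have "\<dots> = PiM {..<n} (\<lambda>i. distr ?P \<mu> (\<lambda>\<omega>. \<omega> i))"
    by (rule PiM_cong) (auto simp: comp)
  finally have ind0: "P.indep_vars (\<lambda>_. \<mu>) (\<lambda>i \<omega>. \<omega> i) {..<n}"
    using n by (subst P.indep_vars_iff_distr_eq_PiM') auto
  have ind: "P.indep_vars (\<lambda>_. borel) (\<lambda>i \<omega>. f (\<omega> i)) {..<n}"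
    by (rule P.indep_vars_compose2[OF ind0]) (use fm in simp)
  have n0: "0 \<in> {..<n}" using n by simp
  have fm0: "(\<lambda>\<omega>. f (\<omega> 0)) \<in> borel_measurable ?P"
    using fm n0 by measurable
  have distrX: "distr ?P borel (\<lambda>\<omega>. f (\<omega> i)) = distr \<mu> borel f" if "i < n" for i
  proof -
    have "distr ?P borel (\<lambda>\<omega>. f (\<omega> i)) = distr (distr ?P \<mu> (\<lambda>\<omega>. \<omega> i)) borel f"
      using that fm by (subst distr_distr) (auto simp: comp_def)
    then show ?thesis using comp[OF that] by simp
  qed
  have E: "integral\<^sup>L ?P (\<lambda>\<omega>. f (\<omega> 0)) = integral\<^sup>L \<mu> f"
  proof -
    have "integral\<^sup>L \<mu> f = integral\<^sup>L (distr ?P \<mu> (\<lambda>\<omega>. \<omega> 0)) f" using comp[OF n] by simp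
    also have "\<dots> = integral\<^sup>L ?P (\<lambda>\<omega>. f (\<omega> 0))"
      using fm n by (subst integral_distr) auto
    finally show ?thesis by simp
  qed
  interpret H: Hoeffding_ineq_iid ?P "{..<n}" "\<lambda>i \<omega>. f (\<omega> i)" "\<lambda>\<omega>. f (\<omega> 0)" 0 1
      "integral\<^sup>L ?P (\<lambda>\<omega>. f (\<omega> 0))"
  proof unfold_locales
    show "distr ?P borel (\<lambda>\<omega>. f (\<omega> i)) = distr ?P borel (\<lambda>\<omega>. f (\<omega> 0))" if "i \<in> {..<n}" for i
      using distrX[of i] distrX[of 0] that n by simp
  qed (use ind fm0 fr in simp_all)
  show ?thesis
    using H.Hoeffding_ineq_abs_ge'[OF t] n by (simp add: E lessThan_empty_iff)
qed


lemma aux: fixes p q a :: real assumes "p \<noteq> 0" "q \<noteq> 0"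
  shows "(a / p) * ((q - p) / q) = a / p - a / q"
proof -
  have "(q - p) / q = 1 - p / q" using assms by (simp add: diff_divide_distrib)
  then show ?thesis using assms by (simp add: right_diff_distrib)
qed

lemma ratio_bound:
  fixes a b a' b' \<rho> :: real
  assumes "\<rho> > 0" "0 \<le> a" "a \<le> b" "0 \<le> b'"
  shows "\<bar>a / (\<rho> + b) - a' / (\<rho> + b')\<bar> \<le> (\<bar>a - a'\<bar> + \<bar>b - b'\<bar>) / \<rho>"
proof -
  have nz: "\<rho> + b \<noteq> 0" "\<rho> + b' \<noteq> 0" using assms by auto
  have e2: "(\<rho> + b') - (\<rho> + b) = b' - b" by simp
  have h: "(a / (\<rho> + b)) * ((b' - b) / (\<rho> + b')) = a / (\<rho> + b) - a / (\<rho> + b')"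
    using aux[OF nz, of a] unfolding e2 .
  have h2: "(a - a') / (\<rho> + b') = a / (\<rho> + b') - a' / (\<rho> + b')"
    by (rule diff_divide_distrib)
  have eq: "a / (\<rho> + b) - a' / (\<rho> + b') = (a - a') / (\<rho> + b') + (a / (\<rho> + b)) * ((b' - b) / (\<rho> + b'))"
    using h h2 by linarith
  have pos: "\<rho> \<le> \<rho> + b'" "0 < \<rho>" using assms by auto
  have 1: "\<bar>(a - a') / (\<rho> + b')\<bar> \<le> \<bar>a - a'\<bar> / \<rho>"
    unfolding abs_divide using pos by (simp add: frac_le)
  have 2: "\<bar>(b' - b) / (\<rho> + b')\<bar> \<le> \<bar>b - b'\<bar> / \<rho>"
    unfolding abs_divide abs_minus_commute[of b' b] using pos by (simp add: frac_le)
  have 3: "\<bar>a / (\<rho> + b)\<bar> \<le> 1"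
    using assms by (simp add: abs_divide)
  have 4: "\<bar>(a / (\<rho> + b)) * ((b' - b) / (\<rho> + b'))\<bar> \<le> 1 * (\<bar>b - b'\<bar> / \<rho>)"
    unfolding abs_mult by (rule mult_mono[OF 3 2]) auto
  have 5: "(\<bar>a - a'\<bar> + \<bar>b - b'\<bar>) / \<rho> = \<bar>a - a'\<bar> / \<rho> + \<bar>b - b'\<bar> / \<rho>"
    by (rule add_divide_distrib)
  show ?thesis unfolding eq 5
    using abs_triangle_ineq[of "(a - a') / (\<rho> + b')" "(a / (\<rho> + b)) * ((b' - b) / (\<rho> + b'))"] 1 4
    by linarith
qed

lemma T_op_eq:
  fixes \<nu> :: "'a measure"
  assumes fin: "finite_measure \<nu>" and sp: "space \<nu> = UNIV"
    and km: "(\<lambda>y. k x y) \<in> borel_measurable \<nu>" and kr: "\<And>x y. k x y \<in> {0..1}"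
    and Msm: "Ms \<in> sets \<nu>" and vm: "vs \<in> borel_measurable \<nu>"
    and vr: "\<And>y. y \<notin> Ms \<Longrightarrow> vs y \<in> {0..1}"
  shows "T_op \<nu> k Ms \<rho> vs x =
     integral\<^sup>L \<nu> (\<lambda>y. k x y * (if y \<in> Ms then 1 else vs y)) / (\<rho> + integral\<^sup>L \<nu> (\<lambda>y. k x y))"
proof -
  interpret finite_measure \<nu> by (rule fin)
  have i1: "integrable \<nu> (\<lambda>y. indicator Ms y *\<^sub>R k x y)"
    by (rule integrable_const_bound[where B=1]) (use kr Msm km in \<open>auto simp: indicator_def\<close>)
  have i2: "integrable \<nu> (\<lambda>y. indicator (space \<nu> - Ms) y *\<^sub>R (k x y * vs y))"
  proof (rule integrable_const_bound[where B=1])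
    show "AE y in \<nu>. norm (indicator (space \<nu> - Ms) y *\<^sub>R (k x y * vs y)) \<le> (1::real)"
    proof (rule AE_I2)
      fix y show "norm (indicator (space \<nu> - Ms) y *\<^sub>R (k x y * vs y)) \<le> (1::real)"
        using kr[of x y] vr[of y] by (auto simp: indicator_def abs_mult intro: mult_le_one)
    qed
  qed (use Msm km vm in auto)
  have "(LINT y:Ms|\<nu>. k x y) + (LINT y:(space \<nu> - Ms)|\<nu>. k x y * vs y)
      = integral\<^sup>L \<nu> (\<lambda>y. indicator Ms y *\<^sub>R k x y + indicator (space \<nu> - Ms) y *\<^sub>R (k x y * vs y))"
    unfolding set_lebesgue_integral_def using i1 i2 by (simp add: integral_add)
  also have "\<dots> = integral\<^sup>L \<nu> (\<lambda>y. k x y * (if y \<in> Ms then 1 else vs y))"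
    by (rule Bochner_Integration.integral_cong) (auto simp: sp indicator_def)
  finally show ?thesis unfolding T_op_def by simp
qed

theorem lemma3:
  fixes \<mu> :: "'a::metric_space measure"
    and k :: "'a \<Rightarrow> 'a \<Rightarrow> real"
    and Ms :: "'a set" and \<rho> :: real
    and vs :: "'a \<Rightarrow> real"
    and x :: 'a and \<epsilon> :: real and n :: nat
  assumes compact: "compact (UNIV :: 'a set)"
    and prob: "prob_space \<mu>" and sets_mu: "sets \<mu> = sets borel"
    and k_meas: "(\<lambda>(x, y). k x y) \<in> borel_measurable (borel \<Otimes>\<^sub>M borel)"
    and k_range: "\<And>x y. k x y \<in> {0..1}"
    and Ms_meas: "Ms \<in> sets borel"
    and rho_pos: "\<rho> > 0"
    and vs_meas: "vs \<in> borel_measurable borel"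
    and vs_range: "\<And>y. y \<notin> Ms \<Longrightarrow> vs y \<in> {0..1}"
    and vs_fix: "\<And>y. y \<notin> Ms \<Longrightarrow> T_op \<mu> k Ms \<rho> vs y = vs y"
    and x_notin: "x \<notin> Ms"
    and eps_pos: "\<epsilon> > 0"
  shows "measure (PiM {..<n} (\<lambda>_. \<mu>))
           {xs \<in> space (PiM {..<n} (\<lambda>_. \<mu>)).
              \<bar>T_op \<mu> k Ms \<rho> vs x - T_op (empirical_measure n xs) k Ms \<rho> vs x\<bar> > \<epsilon>}
         < 4 * exp (- (real n * \<rho>\<^sup>2 * \<epsilon>\<^sup>2) / 9)"
proof -
  let ?P = "PiM {..<n} (\<lambda>_. \<mu>)"
  interpret mu: prob_space \<mu> by (rule prob)
  interpret P: prob_space ?P by (rule prob_space_PiM) (use prob in auto)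
  have sp_mu: "space \<mu> = UNIV" using sets_eq_imp_space_eq[OF sets_mu] by simp
  have meas_mu: "f \<in> borel_measurable \<mu>" if "f \<in> borel_measurable borel" for f :: "'a \<Rightarrow> real"
    by (subst measurable_cong_sets[OF sets_mu refl]) (use that in simp)
  have km: "(\<lambda>y. k x y) \<in> borel_measurable borel"
    using measurable_Pair2[OF k_meas, of x] by simp
  define G where "G y = k x y * (if y \<in> Ms then 1 else vs y)" for y
  note [measurable] = km vs_meas Ms_meas
  have Gm: "G \<in> borel_measurable borel" unfolding G_def by measurable
  have Gr: "G y \<in> {0..1}" for y
    using k_range[of x y] vs_range[of y] by (auto simp: G_def intro: mult_le_one)
  have Gle: "G y \<le> k x y" for y
    using k_range[of x y] vs_range[of y] by (auto simp: G_def intro: mult_left_le)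
  define a where "a = integral\<^sup>L \<mu> G"
  define b where "b = integral\<^sup>L \<mu> (\<lambda>y. k x y)"
  have intG: "integrable \<mu> G"
    by (rule mu.integrable_const_bound[where B=1]) (use Gr meas_mu[OF Gm] in auto)
  have intk: "integrable \<mu> (\<lambda>y. k x y)"
    by (rule mu.integrable_const_bound[where B=1]) (use k_range meas_mu[OF km] in auto)
  have a0: "0 \<le> a" unfolding a_def using Gr by (intro integral_nonneg_AE) auto
  have ab: "a \<le> b" unfolding a_def b_def using intG intk Gle by (intro integral_mono) auto
  have Tmu: "T_op \<mu> k Ms \<rho> vs x = a / (\<rho> + b)"
    unfolding a_def b_def G_def
    by (rule T_op_eq) (use mu.finite_measure_axioms sp_mu meas_mu km vs_meas Ms_meas sets_mu k_range vs_range in auto)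
  show ?thesis
  proof (cases "n = 0")
    case True
    have "measure ?P {xs \<in> space ?P. \<epsilon> < \<bar>T_op \<mu> k Ms \<rho> vs x - T_op (empirical_measure n xs) k Ms \<rho> vs x\<bar>} \<le> 1"
      by (rule P.prob_le_1)
    then show ?thesis using True by simp
  next
    case False
    then have n: "n > 0" by simp
    define t where "t = \<rho> * \<epsilon> / 2"
    have t0: "t \<ge> 0" using rho_pos eps_pos by (simp add: t_def)
    have Temp: "T_op (empirical_measure n xs) k Ms \<rho> vs x =
       ((\<Sum>i<n. G (xs i)) / n) / (\<rho> + (\<Sum>i<n. k x (xs i)) / n)" for xs
    proof -
      have ps: "prob_space (empirical_measure n xs)"
        using n by (simp add: emp_eq) (rule prob_space.prob_space_distr[OF prob_space_measure_pmf], simp)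
      have se: "sets (empirical_measure n xs) = sets borel" using n by (simp add: emp_eq)
      then have spe: "space (empirical_measure n xs) = UNIV" using sets_eq_imp_space_eq[OF se] by simp
      have me: "f \<in> borel_measurable (empirical_measure n xs)" if "f \<in> borel_measurable borel" for f :: "'a \<Rightarrow> real"
        by (subst measurable_cong_sets[OF se refl]) (use that in simp)
      have "T_op (empirical_measure n xs) k Ms \<rho> vs x =
         integral\<^sup>L (empirical_measure n xs) G / (\<rho> + integral\<^sup>L (empirical_measure n xs) (\<lambda>y. k x y))"
        unfolding G_def
        by (rule T_op_eq) (use prob_space.finite_measure[OF ps] spe me km vs_meas Ms_meas se k_range vs_range in auto)
      then show ?thesis using emp_integral[OF n Gm] emp_integral[OF n km] by simp
    qed
    define A where "A = {xs \<in> space ?P. t \<le> \<bar>(\<Sum>i<n. G (xs i)) / n - integral\<^sup>L \<mu> G\<bar>}"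
    define B where "B = {xs \<in> space ?P. t \<le> \<bar>(\<Sum>i<n. k x (xs i)) / n - integral\<^sup>L \<mu> (\<lambda>y. k x y)\<bar>}"
    have hA: "measure ?P A \<le> 2 * exp (-2 * n * t\<^sup>2)"
      unfolding A_def by (rule hoeff[OF prob meas_mu[OF Gm] Gr n t0])
    have hB: "measure ?P B \<le> 2 * exp (-2 * n * t\<^sup>2)"
      unfolding B_def by (rule hoeff[OF prob meas_mu[OF km] _ n t0]) (use k_range in auto)
    have Am: "A \<in> sets ?P" unfolding A_def using meas_mu[OF Gm] by measurable
    have Bm: "B \<in> sets ?P" unfolding B_def using meas_mu[OF km] by measurable
    have sub: "{xs \<in> space ?P. \<epsilon> < \<bar>T_op \<mu> k Ms \<rho> vs x - T_op (empirical_measure n xs) k Ms \<rho> vs x\<bar>}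
        \<subseteq> A \<union> B"
    proof
      fix xs assume xs: "xs \<in> {xs \<in> space ?P. \<epsilon> < \<bar>T_op \<mu> k Ms \<rho> vs x - T_op (empirical_measure n xs) k Ms \<rho> vs x\<bar>}"
      show "xs \<in> A \<union> B"
      proof (rule ccontr)
        assume "xs \<notin> A \<union> B"
        then have 1: "\<bar>(\<Sum>i<n. G (xs i)) / n - a\<bar> < t" and 2: "\<bar>(\<Sum>i<n. k x (xs i)) / n - b\<bar> < t"
          using xs by (auto simp: A_def B_def a_def b_def)
        have b'0: "0 \<le> (\<Sum>i<n. k x (xs i)) / n"
          using k_range by (intro divide_nonneg_nonneg sum_nonneg) auto
        have "\<bar>a / (\<rho> + b) - ((\<Sum>i<n. G (xs i)) / n) / (\<rho> + (\<Sum>i<n. k x (xs i)) / n)\<bar>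
           \<le> (\<bar>a - (\<Sum>i<n. G (xs i)) / n\<bar> + \<bar>b - (\<Sum>i<n. k x (xs i)) / n\<bar>) / \<rho>"
          by (rule ratio_bound[OF rho_pos a0 ab b'0])
        also have "\<dots> < (t + t) / \<rho>"
          using 1 2 rho_pos by (intro divide_strict_right_mono) (auto simp: abs_minus_commute)
        also have "\<dots> = \<epsilon>" using rho_pos by (simp add: t_def)
        finally show False using xs by (simp add: Tmu Temp)
      qed
    qed
    have "measure ?P {xs \<in> space ?P. \<epsilon> < \<bar>T_op \<mu> k Ms \<rho> vs x - T_op (empirical_measure n xs) k Ms \<rho> vs x\<bar>}
        \<le> measure ?P (A \<union> B)"
      by (rule P.finite_measure_mono[OF sub]) (use Am Bm in auto)
    also have "\<dots> \<le> measure ?P A + measure ?P B"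
      by (rule measure_Un_le) (use Am Bm in auto)
    also have "\<dots> \<le> 4 * exp (-2 * n * t\<^sup>2)" using hA hB by simp
    also have "\<dots> < 4 * exp (- (real n * \<rho>\<^sup>2 * \<epsilon>\<^sup>2) / 9)"
    proof -
      have pos: "0 < real n * \<rho>\<^sup>2 * \<epsilon>\<^sup>2" using n rho_pos eps_pos by simp
      have "-2 * n * t\<^sup>2 = - (real n * \<rho>\<^sup>2 * \<epsilon>\<^sup>2) / 2"
        by (simp add: t_def power2_eq_square)
      also have "\<dots> < - (real n * \<rho>\<^sup>2 * \<epsilon>\<^sup>2) / 9" using pos by (simp add: mult_ac)
      finally show ?thesis by simp
    qed
    finally show ?thesis .
  qed
qed

end
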